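(* Let $(B,\mathbb{T},\omega)$ be a $C^*$-dynamical system, and suppose that $A$ is a maximal (abelian $\mathbb{T}$-invariant $*$-subalgebra) of $B$. Then $A$ is a maximal abelian subalgebra of $B$.
   Context: A $C^*$-dynamical system $(B,\mathbb{T},\omega)$ consists of a $C^*$-algebra $B$ and a homomorphism $\omega:\mathbb{T}\to\mathrm{Aut}(B)$ such that $t\mapsto\omega_t(b)$ is norm-continuous for each $b\in B$. A $*$-subalgebra $A\subset B$ is $\mathbb{T}$-invariant if $\omega_t(a)\in A$ for all $a\in A$, $t\in\mathbb{T}$. A maximal (abelian $\mathbb{T}$-invariant $*$-subalgebra) is a $*$-subalgebra of $B$ which is abelian and $\mathbb{T}$-invariant and is maximal (under inclusion) among all abelian $\mathbb{T}$-invariant $*$-subalgebras of $B$. *)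

theory Defs
  imports "HOL-Analysis.Analysis"
begin

text \<open>A C*-algebra structure on the whole type 'a: a Banach algebra (real-normed,
  complete, associative, possibly non-unital) with a complex scalar multiplication
  sc extending the real one, and an involution st satisfying the C*-identity.\<close>

definition cstar_algebra ::
  "(complex \<Rightarrow> 'a::{real_normed_algebra,banach} \<Rightarrow> 'a) \<Rightarrow> ('a \<Rightarrow> 'a) \<Rightarrow> bool" where
  "cstar_algebra sc st \<longleftrightarrow>
     (\<forall>c x y. sc c (x + y) = sc c x + sc c y) \<and>
     (\<forall>c d x. sc (c + d) x = sc c x + sc d x) \<and>
     (\<forall>c d x. sc c (sc d x) = sc (c * d) x) \<and>
     (\<forall>r x. sc (complex_of_real r) x = scaleR r x) \<and>
     (\<forall>c x. norm (sc c x) = cmod c * norm x) \<and>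
     (\<forall>c x y. sc c (x * y) = sc c x * y) \<and>
     (\<forall>c x y. sc c (x * y) = x * sc c y) \<and>
     (\<forall>x y. st (x + y) = st x + st y) \<and>
     (\<forall>c x. st (sc c x) = sc (cnj c) (st x)) \<and>
     (\<forall>x y. st (x * y) = st y * st x) \<and>
     (\<forall>x. st (st x) = x) \<and>
     (\<forall>x. norm (st x * x) = (norm x)\<^sup>2)"

definition star_automorphism ::
  "(complex \<Rightarrow> 'a::{real_normed_algebra,banach} \<Rightarrow> 'a) \<Rightarrow> ('a \<Rightarrow> 'a) \<Rightarrow> ('a \<Rightarrow> 'a) \<Rightarrow> bool" where
  "star_automorphism sc st f \<longleftrightarrow> bij f \<and>
     (\<forall>x y. f (x + y) = f x + f y) \<and>
     (\<forall>c x. f (sc c x) = sc c (f x)) \<and>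
     (\<forall>x y. f (x * y) = f x * f y) \<and>
     (\<forall>x. f (st x) = st (f x))"

definition circle :: "complex set" where
  "circle = {z. cmod z = 1}"

text \<open>A C*-dynamical system (B, T, omega): omega is a homomorphism from T into Aut(B)
  (values outside T are irrelevant), pointwise norm-continuous.\<close>
definition cstar_dynamical_system ::
  "(complex \<Rightarrow> 'a::{real_normed_algebra,banach} \<Rightarrow> 'a) \<Rightarrow> ('a \<Rightarrow> 'a) \<Rightarrow> (complex \<Rightarrow> 'a \<Rightarrow> 'a) \<Rightarrow> bool" where
  "cstar_dynamical_system sc st \<omega> \<longleftrightarrow> cstar_algebra sc st \<and>
     (\<forall>t\<in>circle. star_automorphism sc st (\<omega> t)) \<and>
     (\<forall>s\<in>circle. \<forall>t\<in>circle. \<omega> (s * t) = \<omega> s \<circ> \<omega> t) \<and>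
     (\<forall>b. continuous_on circle (\<lambda>t. \<omega> t b))"

definition subalgebra ::
  "(complex \<Rightarrow> 'a::{real_normed_algebra,banach} \<Rightarrow> 'a) \<Rightarrow> 'a set \<Rightarrow> bool" where
  "subalgebra sc A \<longleftrightarrow> 0 \<in> A \<and>
     (\<forall>x\<in>A. \<forall>y\<in>A. x + y \<in> A) \<and>
     (\<forall>c. \<forall>x\<in>A. sc c x \<in> A) \<and>
     (\<forall>x\<in>A. \<forall>y\<in>A. x * y \<in> A)"

definition star_subalgebra ::
  "(complex \<Rightarrow> 'a::{real_normed_algebra,banach} \<Rightarrow> 'a) \<Rightarrow> ('a \<Rightarrow> 'a) \<Rightarrow> 'a set \<Rightarrow> bool" where
  "star_subalgebra sc st A \<longleftrightarrow> subalgebra sc A \<and> (\<forall>x\<in>A. st x \<in> A)"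

definition abelian :: "'a::times set \<Rightarrow> bool" where
  "abelian A \<longleftrightarrow> (\<forall>x\<in>A. \<forall>y\<in>A. x * y = y * x)"

definition T_invariant :: "(complex \<Rightarrow> 'a \<Rightarrow> 'a) \<Rightarrow> 'a set \<Rightarrow> bool" where
  "T_invariant \<omega> A \<longleftrightarrow> (\<forall>t\<in>circle. \<forall>a\<in>A. \<omega> t a \<in> A)"

definition maximal_abelian_invariant_star_subalgebra ::
  "(complex \<Rightarrow> 'a::{real_normed_algebra,banach} \<Rightarrow> 'a) \<Rightarrow> ('a \<Rightarrow> 'a) \<Rightarrow> (complex \<Rightarrow> 'a \<Rightarrow> 'a) \<Rightarrow> 'a set \<Rightarrow> bool" where
  "maximal_abelian_invariant_star_subalgebra sc st \<omega> A \<longleftrightarrow>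
     star_subalgebra sc st A \<and> abelian A \<and> T_invariant \<omega> A \<and>
     (\<forall>C. star_subalgebra sc st C \<and> abelian C \<and> T_invariant \<omega> C \<and> A \<subseteq> C \<longrightarrow> C = A)"

definition maximal_abelian_subalgebra ::
  "(complex \<Rightarrow> 'a::{real_normed_algebra,banach} \<Rightarrow> 'a) \<Rightarrow> 'a set \<Rightarrow> bool" where
  "maximal_abelian_subalgebra sc A \<longleftrightarrow>
     subalgebra sc A \<and> abelian A \<and>
     (\<forall>C. subalgebra sc C \<and> abelian C \<and> A \<subseteq> C \<longrightarrow> C = A)"

end

theory Submission
  imports Defs
begin

locale cstar =
  fixes sc :: "complex \<Rightarrow> 'a::{real_normed_algebra,banach} \<Rightarrow> 'a" and st :: "'a \<Rightarrow> 'a"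
  assumes cs: "cstar_algebra sc st"
begin

lemma sc_add: "sc c (x + y) = sc c x + sc c y" using cs unfolding cstar_algebra_def by meson
lemma sc_add_left: "sc (c + d) x = sc c x + sc d x" using cs unfolding cstar_algebra_def by meson
lemma sc_sc: "sc c (sc d x) = sc (c * d) x" using cs unfolding cstar_algebra_def by meson
lemma sc_real: "sc (complex_of_real r) x = r *\<^sub>R x" using cs unfolding cstar_algebra_def by meson
lemma norm_sc: "norm (sc c x) = cmod c * norm x" using cs unfolding cstar_algebra_def by meson
lemma sc_mult_left: "sc c x * y = sc c (x * y)" using cs unfolding cstar_algebra_def by metis
lemma sc_mult_right: "x * sc c y = sc c (x * y)" using cs unfolding cstar_algebra_def by metis
lemma st_add: "st (x + y) = st x + st y" using cs unfolding cstar_algebra_def by meson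
lemma st_sc: "st (sc c x) = sc (cnj c) (st x)" using cs unfolding cstar_algebra_def by meson
lemma st_mult: "st (x * y) = st y * st x" using cs unfolding cstar_algebra_def by meson
lemma st_st: "st (st x) = x" using cs unfolding cstar_algebra_def by meson
lemma cstar_id: "norm (st x * x) = (norm x)\<^sup>2" using cs unfolding cstar_algebra_def by meson

lemma sc_zero_left: "sc 0 x = 0" using sc_real[of 0 x] by simp
lemma sc_one: "sc 1 x = x" using sc_real[of 1 x] by simp
lemma sc_zero_right: "sc c 0 = 0" using sc_add[of c 0 0] by simp
lemma sc_minus: "sc c (- x) = - sc c x"
  using sc_add[of c x "-x"] sc_zero_right by (metis minus_unique add.right_inverse)
lemma sc_diff: "sc c (x - y) = sc c x - sc c y"
  using sc_add[of c x "-y"] sc_minus by simp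
lemma sc_minus_left: "sc (- c) x = - sc c x"
  using sc_add_left[of c "-c" x] sc_zero_left by (metis minus_unique add.right_inverse)
lemma sc_scaleR: "sc c (r *\<^sub>R x) = r *\<^sub>R sc c x"
  by (metis sc_real sc_sc mult.commute)
lemma st_zero: "st 0 = 0" using st_add[of 0 0] by simp
lemma st_minus: "st (- x) = - st x"
  using st_add[of x "-x"] st_zero by (metis minus_unique add.right_inverse)
lemma st_diff: "st (x - y) = st x - st y" using st_add[of x "-y"] st_minus by simp
lemma st_scaleR: "st (r *\<^sub>R x) = r *\<^sub>R st x"
  by (metis st_sc sc_real complex_cnj_complex_of_real)
lemma sc_i_i: "sc \<i> (sc \<i> x) = - x"
  by (simp add: sc_sc sc_minus_left sc_one)

lemma norm_st_le: "norm x \<le> norm (st x)"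
proof (cases "x = 0")
  case True then show ?thesis by simp
next
  case False
  have "(norm x)\<^sup>2 \<le> norm (st x) * norm x" using cstar_id[of x] norm_mult_ineq[of "st x" x] by simp
  then show ?thesis using False by (simp add: power2_eq_square)
qed
lemma norm_st: "norm (st x) = norm x"
  using norm_st_le[of x] norm_st_le[of "st x"] st_st by (simp add: antisym)

lemma bl_st: "bounded_linear st"
  by (rule bounded_linear_intro[where K=1]) (auto simp: st_add st_scaleR norm_st)
lemma bl_sc: "bounded_linear (sc c)"
  by (rule bounded_linear_intro[where K="cmod c"]) (auto simp: sc_add sc_scaleR norm_sc)

lemma cstar_sa: "st h = h \<Longrightarrow> norm (h * h) = (norm h)\<^sup>2" using cstar_id[of h] by simp

lemma key_iso:
  assumes gs: "st g = g" and ks: "st k = k" and gk: "g * k = k * g"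
    and rel: "g * g + g + g + k * k = 0"
    and c1: "c + cnj c = 0" and c2: "cnj c * c = 1"
  shows "st (k * b + sc c (b + g * b)) * (k * b + sc c (b + g * b)) = st b * b"
proof -
  define u where "u = b + g * b"
  have stw: "st (k * b + sc c u) = st b * k + sc (cnj c) (st u)"
    by (simp add: st_add st_mult st_sc ks)
  have stu: "st u = st b + st b * g" by (simp add: u_def st_add st_mult gs)
  have "(st b * k + sc (cnj c) (st u)) * (k * b + sc c u)
      = st b * k * (k * b) + st b * k * sc c u + sc (cnj c) (st u) * (k * b)
        + sc (cnj c) (st u) * sc c u"
    by (simp add: algebra_simps)
  also have "st b * k * sc c u = sc c (st b * k * u)" by (simp add: sc_mult_right)
  also have "sc (cnj c) (st u) * (k * b) = sc (cnj c) (st b * k * u)"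
  proof -
    have "st u * (k * b) = (st b + st b * g) * (k * b)" by (simp only: stu)
    also have "\<dots> = st b * k * b + st b * (g * k) * b" by (simp add: algebra_simps)
    also have "\<dots> = st b * k * u" by (simp add: gk u_def algebra_simps)
    finally have "st u * (k * b) = st b * k * u" .
    then show ?thesis by (simp add: sc_mult_left)
  qed
  also have "sc (cnj c) (st u) * sc c u = st u * u"
  proof -
    have "c * cnj c = 1" using c2 by (simp add: mult.commute)
    then show ?thesis by (simp add: sc_mult_left sc_mult_right sc_sc sc_one)
  qed
  also have "sc c (st b * k * u) + sc (cnj c) (st b * k * u) = 0"
    using sc_add_left[of c "cnj c" "st b * k * u"] c1 sc_zero_left by simp
  then have "st b * k * (k * b) + sc c (st b * k * u) + sc (cnj c) (st b * k * u) + st u * u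
      = st b * k * (k * b) + st u * u" by (simp add: add.assoc)
  also have "st b * k * (k * b) + st u * u = st b * b + st b * (g * g + g + g + k * k) * b"
    unfolding stu unfolding u_def by (simp add: algebra_simps)
  also have "\<dots> = st b * b" by (simp add: rel)
  finally show ?thesis using stw by (simp add: u_def)
qed

lemma key_contr:
  assumes gs: "st g = g" and ks: "st k = k" and gk: "g * k = k * g"
    and rel: "g * g + g + g + k * k = 0"
  shows "norm (k * b) \<le> norm b"
proof -
  define w where "w = k * b + sc \<i> (b + g * b)"
  define v where "v = k * b + sc (- \<i>) (b + g * b)"
  have "st w * w = st b * b" unfolding w_def by (rule key_iso[OF gs ks gk rel]) auto
  then have nw: "norm w = norm b" using cstar_id[of w] cstar_id[of b]
    by (metis norm_ge_zero power2_eq_imp_eq)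
  have "st v * v = st b * b" unfolding v_def by (rule key_iso[OF gs ks gk rel]) auto
  then have nv: "norm v = norm b" using cstar_id[of v] cstar_id[of b]
    by (metis norm_ge_zero power2_eq_imp_eq)
  have "(1/2) *\<^sub>R (w + v) = (1/2) *\<^sub>R (k * b + k * b)"
    by (simp add: w_def v_def sc_minus_left)
  also have "\<dots> = k * b" by (metis scaleR_add_left field_sum_of_halves scaleR_one scaleR_add_right)
  finally have "k * b = (1/2) *\<^sub>R (w + v)" by simp
  then have "norm (k * b) = (1/2) * norm (w + v)" by simp
  also have "\<dots> \<le> (1/2) * (norm w + norm v)" by (simp add: norm_triangle_ineq)
  finally show ?thesis using nw nv by simp
qed

lemma cont_st: "continuous_on UNIV st"
  by (simp add: bl_st linear_continuous_on)

lemma sqrt_exists: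
  assumes hs: "st h = h" and hn: "norm h < 1"
  shows "\<exists>c. st c = c \<and> c * h = h * c \<and> c * c + c + c + h * h = 0"
proof -
  define q where "q = norm (h * h)"
  have q0: "0 \<le> q" by (simp add: q_def)
  have "q \<le> norm h * norm h" unfolding q_def by (rule norm_mult_ineq)
  also have "\<dots> < 1" using hn by (metis mult_le_one norm_ge_zero less_le mult_strict_mono zero_less_one mult_1 order.strict_trans1)
  finally have q1: "q < 1" .
  define r where "r = (1 + q) / 2"
  have r0: "0 \<le> r" and r1: "r < 1" using q0 q1 by (auto simp: r_def)
  have rq: "(q + r * r) / 2 \<le> r"
  proof -
    have "r * r \<le> r" using r0 r1 by (simp add: mult_left_le_one_le)
    moreover have "q \<le> r" using q1 by (simp add: r_def)
    ultimately show ?thesis by simp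
  qed
  define S where "S = {c. norm c \<le> r \<and> st c = c \<and> c * h = h * c}"
  define f where "f c = - ((1/2) *\<^sub>R (h * h + c * c))" for c
  have clS: "closed S"
  proof -
    have "S = cball 0 r \<inter> {c. st c = c} \<inter> {c. c * h = h * c}"
      by (auto simp: S_def)
    moreover have "closed {c. st c = c}"
      by (rule closed_Collect_eq) (auto simp: cont_st continuous_on_id)
    moreover have "closed {c. c * h = h * c}"
      by (rule closed_Collect_eq) (auto intro!: continuous_intros)
    ultimately show ?thesis by (auto intro!: closed_Int)
  qed
  have cS: "complete S" using clS by (simp add: complete_eq_closed)
  have ne: "S \<noteq> {}"
  proof -
    have "0 \<in> S" using r0 by (simp add: S_def st_zero)
    then show ?thesis by blast
  qed
  have fS: "f ` S \<subseteq> S"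
  proof
    fix y assume "y \<in> f ` S"
    then obtain c where c: "c \<in> S" and y: "y = f c" by blast
    have cn: "norm c \<le> r" and cs': "st c = c" and ch: "c * h = h * c" using c by (auto simp: S_def)
    have "norm y = (1/2) * norm (h * h + c * c)" by (simp add: y f_def)
    also have "\<dots> \<le> (1/2) * (q + norm c * norm c)"
    proof -
      have "norm (h * h + c * c) \<le> norm (h * h) + norm (c * c)" by (rule norm_triangle_ineq)
      also have "\<dots> \<le> q + norm c * norm c" by (simp add: q_def norm_mult_ineq)
      finally show ?thesis by simp
    qed
    also have "\<dots> \<le> (1/2) * (q + r * r)" using cn r0 by (simp add: mult_mono')
    also have "\<dots> \<le> r" using rq by simp
    finally have yn: "norm y \<le> r" .
    have ys: "st y = y" by (simp add: y f_def st_minus st_scaleR st_add st_mult hs cs')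
    have yh: "y * h = h * y"
    proof -
      have "(h * h + c * c) * h = h * (h * h + c * c)"
      proof -
        have "c * c * h = h * (c * c)" by (metis ch mult.assoc)
        then show ?thesis by (simp add: distrib_left distrib_right mult.assoc)
      qed
      then show ?thesis by (simp add: y f_def)
    qed
    show "y \<in> S" using yn ys yh by (simp add: S_def)
  qed
  have lip: "dist (f x) (f y) \<le> r * dist x y" if "x \<in> S" "y \<in> S" for x y
  proof -
    have xn: "norm x \<le> r" and yn: "norm y \<le> r" using that by (auto simp: S_def)
    have "f x - f y = (1/2) *\<^sub>R (y * y - x * x)" by (simp add: f_def algebra_simps)
    moreover have "y * y - x * x = y * (y - x) + (y - x) * x" by (simp add: algebra_simps)
    ultimately have "norm (f x - f y) = (1/2) * norm (y * (y - x) + (y - x) * x)" by simp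
    also have "\<dots> \<le> (1/2) * (norm y * norm (y - x) + norm (y - x) * norm x)"
    proof -
      have "norm (y * (y - x) + (y - x) * x) \<le> norm (y * (y - x)) + norm ((y - x) * x)"
        by (rule norm_triangle_ineq)
      also have "\<dots> \<le> norm y * norm (y - x) + norm (y - x) * norm x"
        by (intro add_mono norm_mult_ineq)
      finally show ?thesis by simp
    qed
    also have "\<dots> \<le> (1/2) * (r * norm (y - x) + norm (y - x) * r)"
      using xn yn by (intro mult_left_mono add_mono mult_right_mono mult_left_mono) auto
    also have "\<dots> = r * dist x y" by (simp add: dist_norm norm_minus_commute)
    finally show ?thesis by (simp add: dist_norm)
  qed
  obtain c where c: "c \<in> S" "f c = c" using Banach_fix[OF cS ne r0 r1 fS lip] by blast
  have "c * c + c + c + h * h = c + c + (h * h + c * c)" by (simp add: algebra_simps)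
  also have "h * h + c * c = - (c + c)"
  proof -
    have "(2::real) *\<^sub>R c = - (h * h + c * c)" using c(2) unfolding f_def
      by (metis (no_types, lifting) minus_minus scaleR_scaleR scaleR_one nonzero_divide_eq_eq
          zero_neq_numeral divide_self_if times_divide_eq_left scaleR_minus_right)
    then show ?thesis by (simp add: scaleR_2 minus_equation_iff)
  qed
  finally show ?thesis using c(1) by (auto simp: S_def)
qed

lemma hom_contr:
  assumes add: "\<And>x y. \<phi> (x + y) = \<phi> x + \<phi> y"
    and scl: "\<And>c x. \<phi> (sc c x) = sc c (\<phi> x)"
    and mul: "\<And>x y. \<phi> (x * y) = \<phi> x * \<phi> y"
    and sth: "\<And>x. \<phi> (st x) = st (\<phi> x)"
  shows "norm (\<phi> b) \<le> norm b"
proof -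
  have p0: "\<phi> 0 = 0" using add[of 0 0] by simp
  have pR: "\<phi> (r *\<^sub>R x) = r *\<^sub>R \<phi> x" for r x using scl[of "complex_of_real r" x] by (simp add: sc_real)
  have lt1: "norm (\<phi> h) \<le> 1" if hs: "st h = h" and hn: "norm h < 1" for h
  proof -
    obtain c where c: "st c = c" "c * h = h * c" "c * c + c + c + h * h = 0"
      using sqrt_exists[OF hs hn] by blast
    have ks: "st (\<phi> h) = \<phi> h" using sth[of h] hs by simp
    have gs: "st (\<phi> c) = \<phi> c" using sth[of c] c(1) by simp
    have gk: "\<phi> c * \<phi> h = \<phi> h * \<phi> c" using c(2) mul by metis
    have rel: "\<phi> c * \<phi> c + \<phi> c + \<phi> c + \<phi> h * \<phi> h = 0"
      using arg_cong[OF c(3), of \<phi>] by (simp add: add mul p0)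
    have "norm (\<phi> h * \<phi> h) \<le> norm (\<phi> h)" by (rule key_contr[OF gs ks gk rel])
    then have "(norm (\<phi> h))\<^sup>2 \<le> norm (\<phi> h)" using cstar_sa[OF ks] by simp
    then have "norm (\<phi> h) * norm (\<phi> h) \<le> 1 * norm (\<phi> h)" by (simp add: power2_eq_square)
    then show ?thesis
      by (cases "norm (\<phi> h) = 0") (auto dest: mult_right_le_imp_le)
  qed
  have sa: "norm (\<phi> h) \<le> norm h" if hs: "st h = h" for h
  proof (rule ccontr)
    assume "\<not> ?thesis"
    then have lt: "norm h < norm (\<phi> h)" by simp
    define s where "s = (norm h + norm (\<phi> h)) / 2"
    have n0: "0 \<le> norm h" by simp
    have s0: "0 < s" and s1: "norm h < s" and s2: "s < norm (\<phi> h)"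
    proof -
      have p: "0 < norm (\<phi> h)" using n0 lt by (rule le_less_trans)
      show "0 < s" unfolding s_def using p n0 by (simp add: add_nonneg_pos)
      show "norm h < s" unfolding s_def using lt by argo
      show "s < norm (\<phi> h)" unfolding s_def using lt by argo
    qed
    define h' where "h' = (1 / s) *\<^sub>R h"
    have "st h' = h'" by (simp add: h'_def st_scaleR hs)
    moreover have "norm h' < 1" using s0 s1 by (simp add: h'_def)
    ultimately have "norm (\<phi> h') \<le> 1" by (rule lt1)
    moreover have "\<phi> h' = (1 / s) *\<^sub>R \<phi> h" by (simp add: h'_def pR)
    ultimately have "norm (\<phi> h) / s \<le> 1" using s0 by simp
    then have "norm (\<phi> h) \<le> s" using s0 by (simp add: divide_le_eq)
    then show False using s2 by simp
  qed
  have e1: "(norm (\<phi> b))\<^sup>2 = norm (st (\<phi> b) * \<phi> b)" by (rule cstar_id[symmetric])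
  have e2: "st (\<phi> b) * \<phi> b = \<phi> (st b * b)" by (simp only: mul sth)
  have sb: "st (st b * b) = st b * b" by (simp only: st_mult st_st)
  have "(norm (\<phi> b))\<^sup>2 \<le> (norm b)\<^sup>2" using e1 e2 sa[OF sb] cstar_id[of b] by simp
  then show ?thesis by (rule power2_le_imp_le) simp
qed

end

definition cm :: "'a::times set \<Rightarrow> 'a set" where "cm X = {y. \<forall>m\<in>X. y * m = m * y}"

locale cdyn = cstar sc st
  for sc :: "complex \<Rightarrow> 'a::{real_normed_algebra,banach} \<Rightarrow> 'a" and st :: "'a \<Rightarrow> 'a" +
  fixes \<omega> :: "complex \<Rightarrow> 'a \<Rightarrow> 'a"
  assumes dyn: "cstar_dynamical_system sc st \<omega>"
begin

lemma aut: "t \<in> circle \<Longrightarrow> star_automorphism sc st (\<omega> t)"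
  using dyn unfolding cstar_dynamical_system_def by blast
lemma om_add: "t \<in> circle \<Longrightarrow> \<omega> t (x + y) = \<omega> t x + \<omega> t y"
  using aut unfolding star_automorphism_def by blast
lemma om_sc: "t \<in> circle \<Longrightarrow> \<omega> t (sc c x) = sc c (\<omega> t x)"
  using aut unfolding star_automorphism_def by blast
lemma om_mult: "t \<in> circle \<Longrightarrow> \<omega> t (x * y) = \<omega> t x * \<omega> t y"
  using aut unfolding star_automorphism_def by blast
lemma om_st: "t \<in> circle \<Longrightarrow> \<omega> t (st x) = st (\<omega> t x)"
  using aut unfolding star_automorphism_def by blast
lemma om_bij: "t \<in> circle \<Longrightarrow> bij (\<omega> t)"
  using aut unfolding star_automorphism_def by blast
lemma om_grp: "s \<in> circle \<Longrightarrow> t \<in> circle \<Longrightarrow> \<omega> (s * t) x = \<omega> s (\<omega> t x)"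
  using dyn unfolding cstar_dynamical_system_def by (metis comp_apply)
lemma om_cont: "continuous_on circle (\<lambda>t. \<omega> t b)"
  using dyn unfolding cstar_dynamical_system_def by blast

lemma one_circle: "1 \<in> circle" by (simp add: circle_def)
lemma cnj_circle: "t \<in> circle \<Longrightarrow> cnj t \<in> circle" by (simp add: circle_def)
lemma mult_circle: "s \<in> circle \<Longrightarrow> t \<in> circle \<Longrightarrow> s * t \<in> circle" by (simp add: circle_def norm_mult)
lemma t_cnj: "t \<in> circle \<Longrightarrow> t * cnj t = 1"
  using complex_norm_square[of t] by (simp add: circle_def)

lemma om_one: "\<omega> 1 x = x"
proof -
  have "\<omega> 1 (\<omega> 1 x) = \<omega> 1 x" using om_grp[OF one_circle one_circle, of x] by simp
  then show ?thesis using om_bij[OF one_circle] by (metis bij_is_inj injD)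
qed

lemma om_inv: "t \<in> circle \<Longrightarrow> \<omega> t (\<omega> (cnj t) x) = x"
  using om_grp[of t "cnj t" x] t_cnj cnj_circle om_one by metis

lemma om_zero: "t \<in> circle \<Longrightarrow> \<omega> t 0 = 0" using om_add[of t 0 0] by simp

lemma om_contr: "t \<in> circle \<Longrightarrow> norm (\<omega> t x) \<le> norm x"
  by (rule hom_contr) (auto simp: om_add om_sc om_mult om_st)

lemma om_scaleR: "t \<in> circle \<Longrightarrow> \<omega> t (r *\<^sub>R x) = r *\<^sub>R \<omega> t x"
  using om_sc[of t "complex_of_real r" x] by (simp add: sc_real)

lemma om_bl: "t \<in> circle \<Longrightarrow> bounded_linear (\<omega> t)"
  by (rule bounded_linear_intro[where K=1]) (auto simp: om_add om_scaleR om_contr)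

lemma cm_zero: "(0::'a) \<in> cm X" by (simp add: cm_def)
lemma cm_add: "(x::'a) \<in> cm X \<Longrightarrow> y \<in> cm X \<Longrightarrow> x + y \<in> cm X"
  by (simp add: cm_def distrib_left distrib_right)
lemma cm_sc: "(x::'a) \<in> cm X \<Longrightarrow> sc c x \<in> cm X"
  by (simp add: cm_def sc_mult_left sc_mult_right)
lemma cm_mult: "(x::'a) \<in> cm X \<Longrightarrow> y \<in> cm X \<Longrightarrow> x * y \<in> cm X"
  unfolding cm_def
proof (intro CollectI ballI)
  fix m assume a: "x \<in> {y. \<forall>m\<in>X. y * m = m * y}" "y \<in> {y. \<forall>m\<in>X. y * m = m * y}" and m: "m \<in> X"
  have "x * y * m = x * (y * m)" by (simp add: mult.assoc)
  also have "\<dots> = x * (m * y)" using a(2) m by simp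
  also have "\<dots> = (x * m) * y" by (simp add: mult.assoc)
  also have "\<dots> = (m * x) * y" using a(1) m by simp
  finally show "x * y * m = m * (x * y)" by (simp add: mult.assoc)
qed
lemma cm_st: assumes "\<forall>m\<in>(X::'a set). st m \<in> X" "x \<in> cm X" shows "st x \<in> cm X"
  unfolding cm_def
proof (intro CollectI ballI)
  fix m assume m: "m \<in> X"
  have "x * st m = st m * x" using assms m by (auto simp: cm_def)
  then have "st (x * st m) = st (st m * x)" by simp
  then show "st x * m = m * st x" by (simp add: st_mult st_st)
qed
lemma cm_om: assumes "\<forall>t\<in>circle. \<forall>m\<in>(X::'a set). \<omega> t m \<in> X" "x \<in> cm X" "t \<in> circle"
  shows "\<omega> t x \<in> cm X"
  unfolding cm_def
proof (intro CollectI ballI)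
  fix m assume m: "m \<in> X"
  define m' where "m' = \<omega> (cnj t) m"
  have m'X: "m' \<in> X" using assms(1) cnj_circle[OF assms(3)] m by (simp add: m'_def)
  have mm: "m = \<omega> t m'" by (simp add: m'_def om_inv assms(3))
  have "x * m' = m' * x" using assms(2) m'X by (auto simp: cm_def)
  then show "\<omega> t x * m = m * \<omega> t x" using mm om_mult[OF assms(3)] by metis
qed

lemma cm_closed: "closed (cm (X::'a set))"
proof -
  have "cm X = (\<Inter>m\<in>X. {y. y * m = m * y})" by (auto simp: cm_def)
  moreover have "closed {y. y * m = m * y}" for m :: 'a
    by (rule closed_Collect_eq) (auto intro!: continuous_intros)
  ultimately show ?thesis by auto
qed

end

locale cmax = cdyn sc st \<omega>
  for sc :: "complex \<Rightarrow> 'a::{real_normed_algebra,banach} \<Rightarrow> 'a" and st \<omega> +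
  fixes A :: "'a set"
  assumes mx: "maximal_abelian_invariant_star_subalgebra sc st \<omega> A"
begin

lemma A_st: "a \<in> A \<Longrightarrow> st a \<in> A"
  using mx unfolding maximal_abelian_invariant_star_subalgebra_def star_subalgebra_def by blast
lemma A_om: "t \<in> circle \<Longrightarrow> a \<in> A \<Longrightarrow> \<omega> t a \<in> A"
  using mx unfolding maximal_abelian_invariant_star_subalgebra_def T_invariant_def by blast
lemma A_ab: "a \<in> A \<Longrightarrow> b \<in> A \<Longrightarrow> a * b = b * a"
  using mx unfolding maximal_abelian_invariant_star_subalgebra_def abelian_def by blast
lemma A_sub: "subalgebra sc A"
  using mx unfolding maximal_abelian_invariant_star_subalgebra_def star_subalgebra_def by blast
lemma A_max: "star_subalgebra sc st C \<Longrightarrow> abelian C \<Longrightarrow> T_invariant \<omega> C \<Longrightarrow> A \<subseteq> C \<Longrightarrow> C = A"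
  using mx unfolding maximal_abelian_invariant_star_subalgebra_def by blast
lemma A_add: "a \<in> A \<Longrightarrow> b \<in> A \<Longrightarrow> a + b \<in> A" using A_sub by (simp add: subalgebra_def)
lemma A_sc: "a \<in> A \<Longrightarrow> sc c a \<in> A" using A_sub by (simp add: subalgebra_def)
lemma A_zero: "0 \<in> A" using A_sub by (simp add: subalgebra_def)
lemma A_scaleR: "a \<in> A \<Longrightarrow> r *\<^sub>R a \<in> A" using A_sc[of a "complex_of_real r"] by (simp add: sc_real)
lemma A_sum: "finite I \<Longrightarrow> (\<And>i. i \<in> I \<Longrightarrow> f i \<in> A) \<Longrightarrow> sum f I \<in> A"
  by (induction I rule: finite_induct) (auto simp: A_zero A_add)

lemma A_stc: "\<forall>m\<in>A. st m \<in> A" using A_st by blast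
lemma A_omc: "\<forall>t\<in>circle. \<forall>m\<in>A. \<omega> t m \<in> A" using A_om by blast

lemma L1:
  assumes AM: "A \<subseteq> M" and Mst: "\<forall>m\<in>M. st m \<in> M" and Mom: "\<forall>t\<in>circle. \<forall>m\<in>M. \<omega> t m \<in> M"
    and Mab: "\<forall>m\<in>M. \<forall>m'\<in>M. m * m' = m' * m"
  shows "M \<subseteq> A"
proof -
  define Z where "Z = cm M \<inter> cm (cm M)"
  have st1: "\<forall>m\<in>cm M. st m \<in> cm M" using cm_st[OF Mst] by blast
  have om1: "\<forall>t\<in>circle. \<forall>m\<in>cm M. \<omega> t m \<in> cm M" using cm_om[OF Mom] by blast
  have MZ: "M \<subseteq> Z" using Mab by (auto simp: Z_def cm_def)
  have "star_subalgebra sc st Z"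
    unfolding star_subalgebra_def subalgebra_def Z_def
    by (auto simp: cm_zero cm_add cm_sc cm_mult cm_st[OF Mst] cm_st[OF st1])
  moreover have "abelian Z" unfolding abelian_def Z_def cm_def by blast
  moreover have "T_invariant \<omega> Z" unfolding T_invariant_def Z_def
    by (auto simp: cm_om[OF Mom] cm_om[OF om1])
  moreover have "A \<subseteq> Z" using AM MZ by blast
  ultimately have "Z = A" by (rule A_max)
  then show ?thesis using MZ by blast
qed

lemma fixed_sa:
  assumes p: "p \<in> cm A" "st p = p" "\<forall>t\<in>circle. \<omega> t p = p"
  shows "p \<in> A"
proof -
  have "insert p A \<subseteq> A"
  proof (rule L1)
    show "\<forall>m\<in>insert p A. st m \<in> insert p A" using p A_st by auto
    show "\<forall>t\<in>circle. \<forall>m\<in>insert p A. \<omega> t m \<in> insert p A" using p A_om by auto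
    show "\<forall>m\<in>insert p A. \<forall>m'\<in>insert p A. m * m' = m' * m"
      using p(1) A_ab unfolding cm_def by auto
  qed auto
  then show ?thesis by blast
qed

lemma eigen:
  assumes y: "y \<in> cm A" and ev: "\<forall>t\<in>circle. \<exists>c. cmod c = 1 \<and> \<omega> t y = sc c y"
  shows "y \<in> A"
proof -
  have ys: "st y \<in> cm A" using cm_st[OF A_stc y] .
  have evs: "\<forall>t\<in>circle. \<exists>c. cmod c = 1 \<and> \<omega> t (st y) = sc c (st y)"
  proof
    fix t assume t: "t \<in> circle"
    obtain c where c: "cmod c = 1" "\<omega> t y = sc c y" using ev t by blast
    have "\<omega> t (st y) = sc (cnj c) (st y)" using c(2) by (simp add: om_st t st_sc)
    then show "\<exists>c. cmod c = 1 \<and> \<omega> t (st y) = sc c (st y)" using c(1) by (metis complex_mod_cnj)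
  qed
  have fixprod: "\<omega> t (st u * u) = st u * u" if "t \<in> circle" "cmod c = 1" "\<omega> t u = sc c u" for t c u
  proof -
    have cc: "c * cnj c = 1" using that(2) complex_norm_square[of c] by simp
    have "\<omega> t (st u * u) = st (sc c u) * sc c u" by (simp add: om_mult om_st that)
    also have "\<dots> = st u * u" by (simp add: st_sc sc_mult_left sc_mult_right sc_sc cc sc_one)
    finally show ?thesis .
  qed
  define p where "p = st y * y"
  define q where "q = y * st y"
  have pA: "p \<in> A"
  proof (rule fixed_sa)
    show "p \<in> cm A" using cm_mult[OF ys y] by (simp add: p_def)
    show "st p = p" by (simp add: p_def st_mult st_st)
    show "\<forall>t\<in>circle. \<omega> t p = p" using ev fixprod p_def by metis
  qed
  have qA: "q \<in> A"
  proof (rule fixed_sa)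
    show "q \<in> cm A" using cm_mult[OF y ys] by (simp add: q_def)
    show "st q = q" by (simp add: q_def st_mult st_st)
    show "\<forall>t\<in>circle. \<omega> t q = q" using evs fixprod[of _ _ "st y"] q_def st_st by metis
  qed
  have yp: "y * p = p * y" and yq: "y * q = q * y" using y pA qA by (auto simp: cm_def)
  have sp: "st y * p = p * st y" and sq: "st y * q = q * st y" using ys pA qA by (auto simp: cm_def)
  have pq: "p * q = p * p"
  proof -
    have "p * q = st y * (y * q)" by (simp add: p_def mult.assoc)
    also have "\<dots> = st y * (q * y)" by (simp add: yq)
    also have "\<dots> = p * p" by (simp add: p_def q_def mult.assoc)
    finally show ?thesis .
  qed
  have qp: "q * p = q * q"
  proof -
    have "q * p = y * (st y * p)" by (simp add: q_def mult.assoc)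
    also have "\<dots> = y * (p * st y)" by (simp add: sp)
    also have "\<dots> = q * q" by (simp add: p_def q_def mult.assoc)
    finally show ?thesis .
  qed
  have pq2: "p * q = q * q"
  proof -
    have "p * q = st (q * p)" by (simp add: p_def q_def st_mult st_st mult.assoc)
    also have "\<dots> = st (q * q)" by (simp add: qp)
    also have "\<dots> = q * q" by (simp add: q_def st_mult st_st mult.assoc)
    finally show ?thesis .
  qed
  define d where "d = p - q"
  have dd: "d * d = 0" unfolding d_def using pq qp pq2 by (simp add: algebra_simps)
  have "st d = d" by (simp add: d_def p_def q_def st_diff st_mult st_st)
  then have "(norm d)\<^sup>2 = 0" using cstar_sa[of d] dd by simp
  then have "p = q" by (simp add: d_def)
  then have nrm: "y * st y = st y * y" by (simp add: p_def q_def)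
  define M where "M = A \<union> range (\<lambda>c. sc c y) \<union> range (\<lambda>c. sc c (st y))"
  have "M \<subseteq> A"
  proof (rule L1)
    show "A \<subseteq> M" by (auto simp: M_def)
    show "\<forall>m\<in>M. st m \<in> M" by (auto simp: M_def A_st st_sc st_st)
    show "\<forall>t\<in>circle. \<forall>m\<in>M. \<omega> t m \<in> M"
    proof (intro ballI)
      fix t m assume t: "t \<in> circle" and m: "m \<in> M"
      obtain c where c: "\<omega> t y = sc c y" using ev t by blast
      obtain c' where c': "\<omega> t (st y) = sc c' (st y)" using evs t by blast
      show "\<omega> t m \<in> M" using m t unfolding M_def
        by (auto simp: A_om om_sc c c' sc_sc)
    qed
    show "\<forall>m\<in>M. \<forall>m'\<in>M. m * m' = m' * m"
    proof (intro ballI)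
      fix m m' assume m: "m \<in> M" and m': "m' \<in> M"
      have ycm: "sc c y \<in> cm A" "sc c (st y) \<in> cm A" for c using cm_sc[OF y] cm_sc[OF ys] by auto
      have "y * st y = st y * y" by (rule nrm)
      have M2: "m \<in> A \<or> (\<exists>c z. z \<in> {y, st y} \<and> m = sc c z)" if "m \<in> M" for m
        using that unfolding M_def by blast
      have Mcm: "m \<in> cm A" if "m \<in> M" for m
        using M2[OF that] ycm A_ab unfolding cm_def by blast
      have czw: "z * w = w * z" if "z \<in> {y, st y}" "w \<in> {y, st y}" for z w
        using that nrm by auto
      have scm: "sc c z * sc d w = sc d w * sc c z" if "z \<in> {y, st y}" "w \<in> {y, st y}" for c d z w
      proof -
        have "sc c z * sc d w = sc (c * d) (z * w)" by (simp add: sc_mult_left sc_mult_right sc_sc mult.commute[of d c])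
        also have "\<dots> = sc (d * c) (w * z)" using czw[OF that] mult.commute[of c d] by metis
        also have "\<dots> = sc d w * sc c z" by (simp add: sc_mult_left sc_mult_right sc_sc mult.commute[of c d])
        finally show ?thesis .
      qed
      show "m * m' = m' * m"
      proof (cases "m \<in> A")
        case True
        then show ?thesis using Mcm[OF m'] unfolding cm_def by auto
      next
        case False
        show ?thesis
        proof (cases "m' \<in> A")
          case True
          then show ?thesis using Mcm[OF m] unfolding cm_def by auto
        next
          case False': False
          obtain c z where "z \<in> {y, st y}" "m = sc c z" using M2[OF m] False by blast
          moreover obtain d w where "w \<in> {y, st y}" "m' = sc d w" using M2[OF m'] False' by blast
          ultimately show ?thesis using scm by blast
        qed
      qed
    qed
  qed
  moreover have "y \<in> M" unfolding M_def using sc_one[of y] by (metis UnI1 UnI2 rangeI)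
  ultimately show ?thesis by blast
qed

end

lemma int_cont:
  fixes f :: "real \<Rightarrow> 'b::banach"
  shows "continuous_on UNIV f \<Longrightarrow> f integrable_on {a..b}"
  by (rule integrable_continuous_interval) (rule continuous_on_subset, auto)

lemma shift_period:
  fixes f :: "real \<Rightarrow> 'b::banach"
  assumes cont: "continuous_on UNIV f" and per: "\<And>t. f (t + 2*pi) = f t"
    and a: "0 \<le> \<alpha>" "\<alpha> \<le> 2*pi"
  shows "integral {0..2*pi} (\<lambda>t. f (t + \<alpha>)) = integral {0..2*pi} f"
proof -
  have int: "f integrable_on {a..b}" for a b by (rule int_cont[OF cont])
  have "integral {0..2*pi} (\<lambda>t. f (t + \<alpha>)) = integral {\<alpha>..2*pi+\<alpha>} f"
  proof -
    have "integral {\<alpha>-\<alpha>..(2*pi+\<alpha>)-\<alpha>} (\<lambda>x. f (x + \<alpha>)) = integral {\<alpha>..2*pi+\<alpha>} f"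
      by (rule integral_shift_real_ivl)
    then show ?thesis by simp
  qed
  also have "\<dots> = integral {\<alpha>..2*pi} f + integral {2*pi..2*pi+\<alpha>} f"
    using Henstock_Kurzweil_Integration.integral_combine[where f=f and a=\<alpha> and c="2*pi" and b="2*pi+\<alpha>"] int a by simp
  also have "integral {2*pi..2*pi+\<alpha>} f = integral {0..\<alpha>} f"
  proof -
    have "integral {2*pi-2*pi..2*pi+\<alpha>-2*pi} (\<lambda>x. f (x + 2*pi)) = integral {2*pi..2*pi+\<alpha>} f"
      by (rule integral_shift_real_ivl)
    then show ?thesis using per by simp
  qed
  also have "integral {\<alpha>..2*pi} f + integral {0..\<alpha>} f = integral {0..2*pi} f"
    using Henstock_Kurzweil_Integration.integral_combine[where f=f and a=0 and c=\<alpha> and b="2*pi"] int a by (simp add: add.commute)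
  finally show ?thesis .
qed

lemma cos_int_integral:
  fixes m :: int
  shows "integral {0..2*pi} (\<lambda>t. cos (of_int m * t)) = (if m = 0 then 2*pi else 0)"
proof (cases "m = 0")
  case True then show ?thesis by simp
next
  case False
  have d: "((\<lambda>t. sin (of_int m * t) / of_int m) has_vector_derivative cos (of_int m * t)) (at t within {0..2*pi})" for t
  proof -
    have "((\<lambda>t. sin (of_int m * t) / of_int m) has_real_derivative cos (of_int m * t)) (at t)"
      using False by (auto intro!: derivative_eq_intros)
    then show ?thesis
      by (simp add: has_real_derivative_iff_has_vector_derivative has_vector_derivative_at_within)
  qed
  have "((\<lambda>t. cos (of_int m * t)) has_integral (sin (of_int m * (2*pi)) / of_int m - sin (of_int m * 0) / of_int m)) {0..2*pi}"
    by (rule fundamental_theorem_of_calculus) (auto intro: d)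
  moreover have "sin (of_int m * (2*pi)) = 0" using sin_int_2pin[of m] by (simp add: mult.commute)
  ultimately show ?thesis using False by (simp add: integral_unique)
qed

definition Dk :: "nat \<Rightarrow> real \<Rightarrow> complex" where "Dk N t = (\<Sum>j<Suc N. cis t ^ j)"
definition Fk :: "nat \<Rightarrow> real \<Rightarrow> real" where "Fk N t = (cmod (Dk N t))\<^sup>2 / real (Suc N)"

lemma Fk_nonneg: "0 \<le> Fk N t" by (simp add: Fk_def)

lemma Fk_cont: "continuous_on UNIV (Fk N)"
  unfolding Fk_def Dk_def by (intro continuous_intros) auto

lemma Fk_expand:
  "complex_of_real (Fk N t) =
   (\<Sum>j<Suc N. \<Sum>k<Suc N. complex_of_real (1 / real (Suc N)) * cis (- (of_int (int k - int j) * t)))"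
proof -
  have "complex_of_real (Fk N t) = complex_of_real (1 / real (Suc N)) * (Dk N t * cnj (Dk N t))"
    unfolding Fk_def by (simp add: complex_norm_square[symmetric] divide_inverse mult.commute)
  also have "Dk N t * cnj (Dk N t) = (\<Sum>j<Suc N. \<Sum>k<Suc N. cis t ^ j * cnj (cis t) ^ k)"
    unfolding Dk_def by (simp only: sum_product cnj_sum complex_cnj_power)
  also have "\<dots> = (\<Sum>j<Suc N. \<Sum>k<Suc N. cis (- (of_int (int k - int j) * t)))"
    by (intro sum.cong refl) (simp add: Complex.DeMoivre cis_cnj cis_mult algebra_simps)
  finally show ?thesis by (simp only: sum_distrib_left)
qed

lemma Fk_real_expand:
  "Fk N t = (\<Sum>j<Suc N. \<Sum>k<Suc N. (1 / real (Suc N)) * cos (of_int (int k - int j) * t))"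
proof -
  have "Fk N t = Re (complex_of_real (Fk N t))" by simp
  also have "\<dots> = (\<Sum>j<Suc N. \<Sum>k<Suc N. (1 / real (Suc N)) * cos (of_int (int k - int j) * t))"
    unfolding Fk_expand by (simp add: Re_sum cos_minus)
  finally show ?thesis .
qed

lemma Fk_integral: "integral {0..2*pi} (Fk N) = 2 * pi"
proof -
  have ic: "(\<lambda>t. (1 / real (Suc N)) * cos (of_int m * t)) integrable_on {0..2*pi}" for m :: int
    by (rule int_cont) (intro continuous_intros)
  have ic2: "(\<lambda>t. cos (of_int m * t)) integrable_on {0..2*pi}" for m :: int
    by (rule int_cont) (intro continuous_intros)
  have "integral {0..2*pi} (Fk N) =
      (\<Sum>j<Suc N. \<Sum>k<Suc N. integral {0..2*pi} (\<lambda>t. (1 / real (Suc N)) * cos (of_int (int k - int j) * t)))"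
    unfolding Fk_real_expand
  proof -
    have "integral {0..2*pi} (\<lambda>t. \<Sum>j<Suc N. \<Sum>k<Suc N. (1 / real (Suc N)) * cos (of_int (int k - int j) * t))
       = (\<Sum>j<Suc N. integral {0..2*pi} (\<lambda>t. \<Sum>k<Suc N. (1 / real (Suc N)) * cos (of_int (int k - int j) * t)))"
      by (rule integral_sum, simp, rule integrable_sum, simp, rule ic)
    also have "\<dots> = (\<Sum>j<Suc N. \<Sum>k<Suc N. integral {0..2*pi} (\<lambda>t. (1 / real (Suc N)) * cos (of_int (int k - int j) * t)))"
      by (intro sum.cong refl integral_sum, simp, rule ic)
    finally show "integral {0..2*pi} (\<lambda>t. \<Sum>j<Suc N. \<Sum>k<Suc N. (1 / real (Suc N)) * cos (of_int (int k - int j) * t))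
       = (\<Sum>j<Suc N. \<Sum>k<Suc N. integral {0..2*pi} (\<lambda>t. (1 / real (Suc N)) * cos (of_int (int k - int j) * t)))" .
  qed
  also have "\<dots> = (\<Sum>j<Suc N. \<Sum>k<Suc N. (if k = j then 2 * pi / real (Suc N) else 0))"
  proof (intro sum.cong refl)
    fix j k
    have "integral {0..2*pi} (\<lambda>t. (1 / real (Suc N)) * cos (of_int (int k - int j) * t))
        = (1 / real (Suc N)) * integral {0..2*pi} (\<lambda>t. cos (of_int (int k - int j) * t))"
      using integral_mult[OF ic2[of "int k - int j"], of "1 / real (Suc N)"] by simp
    also have "\<dots> = (if k = j then 2 * pi / real (Suc N) else 0)"
      using cos_int_integral[of "int k - int j"] by simp
    finally show "integral {0..2*pi} (\<lambda>t. (1 / real (Suc N)) * cos (of_int (int k - int j) * t)) = (if k = j then 2 * pi / real (Suc N) else 0)" .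
  qed
  also have "\<dots> = (\<Sum>j<Suc N. 2 * pi / real (Suc N))"
    by (intro sum.cong refl) (simp add: sum.delta)
  also have "\<dots> = 2 * pi" by simp
  finally show ?thesis .
qed

lemma cis_minus_one_sq: "(cmod (cis t - 1))\<^sup>2 = 2 - 2 * cos t"
proof -
  have "(cmod (cis t - 1))\<^sup>2 = (cos t - 1)\<^sup>2 + (sin t)\<^sup>2" by (simp add: cmod_power2)
  also have "\<dots> = ((cos t)\<^sup>2 + (sin t)\<^sup>2) - 2 * cos t + 1" by (simp add: power2_diff)
  also have "\<dots> = 2 - 2 * cos t" by simp
  finally show ?thesis .
qed

lemma cos_le_delta:
  assumes d: "0 < \<delta>" "\<delta> \<le> pi" and t: "\<delta> \<le> t" "t \<le> 2*pi - \<delta>"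
  shows "cos t \<le> cos \<delta>"
proof (cases "t \<le> pi")
  case True then show ?thesis using cos_monotone_0_pi_le[of \<delta> t] d t by simp
next
  case False
  have "cos t = cos (2*pi - t)" by (simp add: cos_diff)
  also have "\<dots> \<le> cos \<delta>" using cos_monotone_0_pi_le[of \<delta> "2*pi - t"] d t False by simp
  finally show ?thesis .
qed

lemma Fk_bound:
  assumes d: "0 < \<delta>" "\<delta> \<le> pi" and t: "\<delta> \<le> t" "t \<le> 2*pi - \<delta>"
  shows "Fk N t \<le> 4 / (real (Suc N) * (2 - 2 * cos \<delta>))"
proof -
  have cd: "cos \<delta> < 1" using cos_monotone_0_pi[of 0 \<delta>] d by simp
  have ct: "cos t \<le> cos \<delta>" by (rule cos_le_delta[OF d t])
  define z where "z = cis t"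
  have sq: "(cmod (z - 1))\<^sup>2 = 2 - 2 * cos t" by (simp add: z_def cis_minus_one_sq)
  have pos: "0 < 2 - 2 * cos \<delta>" using cd by simp
  have sqge: "2 - 2 * cos \<delta> \<le> (cmod (z - 1))\<^sup>2" using sq ct by simp
  then have z1: "z \<noteq> 1" using pos by auto
  have "Dk N t = (z ^ Suc N - 1) / (z - 1)" unfolding Dk_def z_def[symmetric]
    by (rule geometric_sum) (rule z1)
  then have "cmod (Dk N t) = cmod (z ^ Suc N - 1) / cmod (z - 1)" by (simp add: norm_divide)
  moreover have "cmod (z ^ Suc N - 1) \<le> 2"
  proof -
    have a: "cmod (z ^ Suc N - 1) \<le> cmod (z ^ Suc N) + cmod 1" by (rule norm_triangle_ineq4)
    have b: "cmod (z ^ Suc N) = 1" by (simp only: norm_power z_def norm_cis power_one)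
    show ?thesis using a b by simp
  qed
  ultimately have "cmod (Dk N t) \<le> 2 / cmod (z - 1)"
    by (simp add: divide_right_mono)
  then have "(cmod (Dk N t))\<^sup>2 \<le> (2 / cmod (z - 1))\<^sup>2"
    by (simp add: power_mono)
  also have "\<dots> = 4 / (cmod (z - 1))\<^sup>2" by (simp add: power_divide)
  also have "\<dots> \<le> 4 / (2 - 2 * cos \<delta>)" using sqge pos by (simp add: frac_le)
  finally have "(cmod (Dk N t))\<^sup>2 \<le> 4 / (2 - 2 * cos \<delta>)" .
  then have "(cmod (Dk N t))\<^sup>2 / real (Suc N) \<le> (4 / (2 - 2 * cos \<delta>)) / real (Suc N)"
    by (rule divide_right_mono) simp
  also have "\<dots> = 4 / (real (Suc N) * (2 - 2 * cos \<delta>))" by (simp add: divide_divide_eq_left mult.commute)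
  finally show ?thesis unfolding Fk_def .
qed

context cstar begin

lemma sc_decomp: "sc c v = Re c *\<^sub>R v + Im c *\<^sub>R sc \<i> v"
proof -
  have "c = complex_of_real (Re c) + complex_of_real (Im c) * \<i>" by (simp add: complex_eq_iff)
  then have "sc c v = sc (complex_of_real (Re c)) v + sc (complex_of_real (Im c)) (sc \<i> v)"
    by (metis sc_add_left sc_sc)
  then show ?thesis by (simp add: sc_real)
qed

lemma sc_cont:
  assumes "continuous_on S c" "continuous_on S f"
  shows "continuous_on S (\<lambda>t. sc (c t) (f t))"
proof -
  have "continuous_on S (\<lambda>t. sc \<i> (f t))"
    by (rule bounded_linear.continuous_on[OF bl_sc assms(2)])
  then have "continuous_on S (\<lambda>t. Re (c t) *\<^sub>R f t + Im (c t) *\<^sub>R sc \<i> (f t))"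
    using assms by (intro continuous_intros) auto
  then show ?thesis by (simp add: sc_decomp[symmetric])
qed

lemma sc_sum_left: "sc (sum f I) v = (\<Sum>i\<in>I. sc (f i) v)"
  by (induction I rule: infinite_finite_induct) (auto simp: sc_zero_left sc_add_left)

lemma sc_ofreal_mult: "sc (complex_of_real r * c) v = r *\<^sub>R sc c v"
  by (metis sc_sc sc_real)

end

lemma cis_circle: "cis t \<in> circle" by (simp add: circle_def)

context cmax begin

definition gg :: "'a \<Rightarrow> real \<Rightarrow> 'a" where "gg x t = \<omega> (cis t) x"
definition fc :: "'a \<Rightarrow> int \<Rightarrow> 'a" where
  "fc x m = integral {0..2*pi} (\<lambda>t. sc (cis (- (of_int m * t))) (gg x t))"

lemma gg_cont: "continuous_on UNIV (gg x)"
  unfolding gg_def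
  by (rule continuous_on_compose2[OF om_cont, of UNIV "\<lambda>t. cis t"])
     (auto intro!: continuous_intros simp: cis_circle)

lemma gg_zero: "gg x 0 = x" by (simp add: gg_def om_one)
lemma gg_2pi: "gg x (2*pi) = x" by (simp add: gg_def om_one)
lemma gg_norm: "norm (gg x t) \<le> norm x" by (simp add: gg_def om_contr cis_circle)

lemma ff_cont: "continuous_on UNIV (\<lambda>t. sc (cis (- (of_int m * t))) (gg x t))"
  by (intro sc_cont gg_cont continuous_intros)

lemma ff_int: "(\<lambda>t. sc (cis (- (of_int m * t))) (gg x t)) integrable_on {a..b}"
  by (rule int_cont[OF ff_cont])

lemma fc_cm:
  assumes x: "x \<in> cm A" shows "fc x m \<in> cm A"
  unfolding cm_def
proof (intro CollectI ballI)
  fix a assume a: "a \<in> A"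
  define L where "L v = v * a - a * v" for v
  have bl: "bounded_linear L" unfolding L_def
    by (intro bounded_linear_sub bounded_linear_mult_left bounded_linear_mult_right)
  have "L \<circ> (\<lambda>t. sc (cis (- (of_int m * t))) (gg x t)) = (\<lambda>t. 0)"
  proof
    fix t
    have "sc (cis (- (of_int m * t))) (gg x t) \<in> cm A"
      unfolding gg_def by (intro cm_sc cm_om[OF A_omc x] cis_circle)
    then show "(L \<circ> (\<lambda>t. sc (cis (- (of_int m * t))) (gg x t))) t = 0"
      using a by (simp add: L_def cm_def)
  qed
  then have "L (fc x m) = 0" unfolding fc_def
    using integral_linear[OF ff_int[where m=m and x=x and a=0 and b="2*pi"] bl] by simp
  then show "fc x m * a = a * fc x m" by (simp add: L_def)
qed

lemma fc_eig:
  assumes s: "s \<in> circle"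
  shows "\<exists>c. cmod c = 1 \<and> \<omega> s (fc x m) = sc c (fc x m)"
proof -
  define \<alpha> where "\<alpha> = Arg2pi s"
  have a0: "0 \<le> \<alpha>" and a1: "\<alpha> \<le> 2*pi" using Arg2pi[of s] by (auto simp: \<alpha>_def)
  have "is_Arg s \<alpha>" using Arg2pi[of s] by (simp add: \<alpha>_def)
  then have sa: "s = cis \<alpha>" using s by (simp add: is_Arg_def circle_def cis_conv_exp)
  define f where "f t = sc (cis (- (of_int m * t))) (gg x t)" for t
  have fcont: "continuous_on UNIV f" unfolding f_def by (rule ff_cont)
  have fper: "f (t + 2*pi) = f t" for t
  proof -
    have "cis (t + 2*pi) = cis t" by (simp add: cis_mult[symmetric])
    moreover have "cis (- (of_int m * (t + 2*pi))) = cis (- (of_int m * t))"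
    proof -
      have "cis (- (of_int m * (t + 2*pi))) = cis (- (of_int m * t)) * cis (2 * pi * of_int (- m))"
        by (simp add: cis_mult algebra_simps)
      also have "cis (2 * pi * of_int (- m)) = 1" by (rule cis_multiple_2pi) simp
      finally show ?thesis by simp
    qed
    ultimately show ?thesis by (simp add: f_def gg_def)
  qed
  have pt: "\<omega> s (f t) = sc (cis (of_int m * \<alpha>)) (f (t + \<alpha>))" for t
  proof -
    have "\<omega> s (f t) = sc (cis (- (of_int m * t))) (\<omega> s (\<omega> (cis t) x))"
      by (simp add: f_def gg_def om_sc s)
    also have "\<omega> s (\<omega> (cis t) x) = \<omega> (cis (t + \<alpha>)) x"
      using om_grp[OF s cis_circle, of t x] by (simp add: sa cis_mult add.commute)
    also have "sc (cis (- (of_int m * t))) (\<omega> (cis (t + \<alpha>)) x)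
        = sc (cis (of_int m * \<alpha>)) (f (t + \<alpha>))"
    proof -
      have "cis (of_int m * \<alpha>) * cis (- (of_int m * (t + \<alpha>))) = cis (- (of_int m * t))"
        by (simp add: cis_mult algebra_simps)
      then show ?thesis by (simp add: f_def gg_def sc_sc)
    qed
    finally show ?thesis .
  qed
  have fint: "f integrable_on {0..2*pi}" by (rule int_cont[OF fcont])
  have fsint: "(\<lambda>t. f (t + \<alpha>)) integrable_on {0..2*pi}"
    by (rule int_cont) (intro continuous_on_compose2[OF fcont] continuous_intros, auto)
  have "\<omega> s (fc x m) = integral {0..2*pi} (\<omega> s \<circ> f)"
    unfolding fc_def f_def[symmetric] using integral_linear[OF fint om_bl[OF s]] by simp
  also have "\<omega> s \<circ> f = (\<lambda>t. sc (cis (of_int m * \<alpha>)) (f (t + \<alpha>)))" using pt by (simp add: fun_eq_iff)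
  also have "integral {0..2*pi} (\<lambda>t. sc (cis (of_int m * \<alpha>)) (f (t + \<alpha>)))
      = sc (cis (of_int m * \<alpha>)) (integral {0..2*pi} (\<lambda>t. f (t + \<alpha>)))"
    using integral_linear[OF fsint bl_sc, of "cis (of_int m * \<alpha>)"] by (simp add: o_def)
  also have "integral {0..2*pi} (\<lambda>t. f (t + \<alpha>)) = fc x m"
    unfolding fc_def f_def[symmetric] by (rule shift_period[OF fcont fper a0 a1])
  finally show ?thesis by (intro exI[of _ "cis (of_int m * \<alpha>)"]) simp
qed

lemma fc_A: "x \<in> cm A \<Longrightarrow> fc x m \<in> A"
  by (rule eigen) (auto intro: fc_cm fc_eig)

end

context cmax begin

lemma Zeq: "cm A \<inter> cm (cm A) = A"
proof -
  define Z where "Z = cm A \<inter> cm (cm A)"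
  have st1: "\<forall>m\<in>cm A. st m \<in> cm A" using cm_st[OF A_stc] by blast
  have om1: "\<forall>t\<in>circle. \<forall>m\<in>cm A. \<omega> t m \<in> cm A" using cm_om[OF A_omc] by blast
  have AZ: "A \<subseteq> Z" using A_ab by (auto simp: Z_def cm_def)
  have "star_subalgebra sc st Z"
    unfolding star_subalgebra_def subalgebra_def Z_def
    by (auto simp: cm_zero cm_add cm_sc cm_mult cm_st[OF A_stc] cm_st[OF st1])
  moreover have "abelian Z" unfolding abelian_def Z_def cm_def by blast
  moreover have "T_invariant \<omega> Z" unfolding T_invariant_def Z_def
    by (auto simp: cm_om[OF A_omc] cm_om[OF om1])
  ultimately have "Z = A" using AZ by (rule A_max)
  then show ?thesis by (simp add: Z_def)
qed

lemma A_closed: "closed A"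
  using Zeq[symmetric] cm_closed[of A] cm_closed[of "cm A"] by (metis closed_Int)

lemma sig_A:
  assumes x: "x \<in> cm A"
  shows "integral {0..2*pi} (\<lambda>t. Fk N t *\<^sub>R gg x t) \<in> A"
proof -
  define r where "r = 1 / real (Suc N)"
  define h where "h j k = (\<lambda>t. r *\<^sub>R sc (cis (- (of_int (int k - int j) * t))) (gg x t))" for j k :: nat
  have hint: "h j k integrable_on {0..2*pi}" for j k
    unfolding h_def by (intro integrable_cmul ff_int)
  have eq: "(\<lambda>t. Fk N t *\<^sub>R gg x t) = (\<lambda>t. \<Sum>j<Suc N. \<Sum>k<Suc N. h j k t)"
  proof
    fix t
    have "Fk N t *\<^sub>R gg x t = sc (complex_of_real (Fk N t)) (gg x t)" by (simp add: sc_real)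
    also have "\<dots> = (\<Sum>j<Suc N. \<Sum>k<Suc N. h j k t)"
      unfolding Fk_expand h_def r_def by (simp only: sc_sum_left sc_ofreal_mult)
    finally show "Fk N t *\<^sub>R gg x t = (\<Sum>j<Suc N. \<Sum>k<Suc N. h j k t)" .
  qed
  have "integral {0..2*pi} (\<lambda>t. \<Sum>j<Suc N. \<Sum>k<Suc N. h j k t)
      = (\<Sum>j<Suc N. integral {0..2*pi} (\<lambda>t. \<Sum>k<Suc N. h j k t))"
    by (rule integral_sum, simp, rule integrable_sum, simp, rule hint)
  also have "\<dots> = (\<Sum>j<Suc N. \<Sum>k<Suc N. integral {0..2*pi} (h j k))"
    by (intro sum.cong refl integral_sum, simp, rule hint)
  also have "\<dots> = (\<Sum>j<Suc N. \<Sum>k<Suc N. r *\<^sub>R fc x (int k - int j))"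
    by (intro sum.cong refl) (unfold h_def fc_def, rule integral_cmul)
  finally have "integral {0..2*pi} (\<lambda>t. Fk N t *\<^sub>R gg x t) = (\<Sum>j<Suc N. \<Sum>k<Suc N. r *\<^sub>R fc x (int k - int j))"
    using eq by simp
  moreover have "(\<Sum>j<Suc N. \<Sum>k<Suc N. r *\<^sub>R fc x (int k - int j)) \<in> A"
    by (intro A_sum A_scaleR fc_A[OF x]) auto
  ultimately show ?thesis by simp
qed

end

context cmax begin

lemma approx:
  assumes x: "x \<in> cm A" and e: "0 < \<epsilon>"
  shows "\<exists>a\<in>A. dist a x < \<epsilon>"
proof -
  define g where "g = gg x"
  have gc: "continuous_on UNIV g" unfolding g_def by (rule gg_cont)
  have e2: "0 < \<epsilon> / 2" using e by simp
  obtain d0 where d0: "d0 > 0" "\<And>t. dist t 0 < d0 \<Longrightarrow> dist (g t) (g 0) < \<epsilon> / 2"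
    using gc e2 unfolding continuous_on_iff by (metis UNIV_I)
  obtain d1 where d1: "d1 > 0" "\<And>t. dist t (2*pi) < d1 \<Longrightarrow> dist (g t) (g (2*pi)) < \<epsilon> / 2"
    using gc e2 unfolding continuous_on_iff by (metis UNIV_I)
  define \<delta> where "\<delta> = min (min d0 d1) pi"
  have dpos: "0 < \<delta>" and dpi: "\<delta> \<le> pi" using d0 d1 by (auto simp: \<delta>_def)
  have cd: "cos \<delta> < 1" using cos_monotone_0_pi[of 0 \<delta>] dpos dpi by simp
  define Q where "Q = 2 - 2 * cos \<delta>"
  have Qpos: "0 < Q" using cd by (simp add: Q_def)
  define K where "K = 8 * norm x / Q"
  have K0: "0 \<le> K" using Qpos by (simp add: K_def)
  obtain N :: nat where N: "2 * K / \<epsilon> < real N" using reals_Archimedean2 by blast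
  have KN: "K / real (Suc N) < \<epsilon> / 2"
  proof -
    have "2 * K < \<epsilon> * real N" using N e by (simp add: divide_less_eq mult.commute)
    also have "\<dots> \<le> \<epsilon> * real (Suc N)" using e by simp
    finally have "K < \<epsilon> / 2 * real (Suc N)" by simp
    then show ?thesis by (simp add: divide_less_eq)
  qed
  define F where "F = Fk N"
  have Fc: "continuous_on UNIV F" unfolding F_def by (rule Fk_cont)
  have F0: "0 \<le> F t" for t unfolding F_def by (rule Fk_nonneg)
  have gx: "norm (g t - x) \<le> 2 * norm x" for t
  proof -
    have "norm (g t - x) \<le> norm (g t) + norm x" by (rule norm_triangle_ineq4)
    also have "\<dots> \<le> 2 * norm x" using gg_norm[of x t] by (simp add: g_def)
    finally show ?thesis .
  qed
  have pw: "norm (F t *\<^sub>R (g t - x)) \<le> \<epsilon> / 2 * F t + K / real (Suc N)"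
    if t: "t \<in> {0..2*pi}" for t
  proof -
    have nrm: "norm (F t *\<^sub>R (g t - x)) = F t * norm (g t - x)" using F0[of t] by (simp add: abs_of_nonneg)
    have KN0: "0 \<le> K / real (Suc N)" using K0 by simp
    consider "t < \<delta>" | "t > 2*pi - \<delta>" | "\<delta> \<le> t \<and> t \<le> 2*pi - \<delta>" by linarith
    then show ?thesis
    proof cases
      case 1
      then have "dist t 0 < d0" using t by (simp add: \<delta>_def dist_real_def)
      then have "norm (g t - x) < \<epsilon> / 2" using d0(2) by (simp add: g_def gg_zero dist_norm)
      then have "F t * norm (g t - x) \<le> F t * (\<epsilon> / 2)" using F0[of t] by (intro mult_left_mono) auto
      then show ?thesis using nrm KN0 by argo
    next
      case 2
      then have "dist t (2*pi) < d1" using t by (simp add: \<delta>_def dist_real_def)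
      then have "norm (g t - x) < \<epsilon> / 2" using d1(2) by (simp add: g_def gg_2pi dist_norm)
      then have "F t * norm (g t - x) \<le> F t * (\<epsilon> / 2)" using F0[of t] by (intro mult_left_mono) auto
      then show ?thesis using nrm KN0 by argo
    next
      case 3
      have Fb: "F t \<le> 4 / (real (Suc N) * Q)"
        unfolding F_def Q_def using Fk_bound[OF dpos dpi] 3 by blast
      have "F t * norm (g t - x) \<le> 4 / (real (Suc N) * Q) * (2 * norm x)"
        using Fb gx[of t] F0[of t] Qpos by (intro mult_mono) auto
      also have "\<dots> = K / real (Suc N)" by (simp add: K_def field_simps)
      finally show ?thesis using nrm F0[of t] e by (simp add: add_increasing)
    qed
  qed
  define \<sigma> where "\<sigma> = integral {0..2*pi} (\<lambda>t. F t *\<^sub>R g t)"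
  have sA: "\<sigma> \<in> A" unfolding \<sigma>_def F_def g_def by (rule sig_A[OF x])
  have i1: "(\<lambda>t. F t *\<^sub>R g t) integrable_on {0..2*pi}"
    by (rule int_cont) (intro continuous_intros Fc gc)
  have i2: "(\<lambda>t. F t *\<^sub>R x) integrable_on {0..2*pi}"
    by (rule int_cont) (intro continuous_intros Fc)
  have iF: "F integrable_on {0..2*pi}" by (rule int_cont[OF Fc])
  have IF: "integral {0..2*pi} F = 2 * pi" unfolding F_def by (rule Fk_integral)
  have i2v: "integral {0..2*pi} (\<lambda>t. F t *\<^sub>R x) = (2 * pi) *\<^sub>R x"
    using integral_linear[OF iF bounded_linear_scaleR_left[of x]] IF by (simp add: o_def)
  have "integral {0..2*pi} (\<lambda>t. F t *\<^sub>R (g t - x)) = \<sigma> - (2 * pi) *\<^sub>R x"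
    unfolding \<sigma>_def i2v[symmetric] by (simp add: scaleR_diff_right integral_diff[OF i1 i2])
  moreover have "norm (integral {0..2*pi} (\<lambda>t. F t *\<^sub>R (g t - x)))
      \<le> integral {0..2*pi} (\<lambda>t. \<epsilon> / 2 * F t + K / real (Suc N))"
  proof (rule integral_norm_bound_integral)
    show "(\<lambda>t. F t *\<^sub>R (g t - x)) integrable_on {0..2*pi}"
      by (rule int_cont) (intro continuous_intros Fc gc)
    show "(\<lambda>t. \<epsilon> / 2 * F t + K / real (Suc N)) integrable_on {0..2*pi}"
      by (rule int_cont) (intro continuous_intros Fc)
  qed (rule pw)
  moreover have "integral {0..2*pi} (\<lambda>t. \<epsilon> / 2 * F t + K / real (Suc N))
      = 2 * pi * (\<epsilon> / 2 + K / real (Suc N))"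
  proof -
    have "integral {0..2*pi} (\<lambda>t. \<epsilon> / 2 * F t + K / real (Suc N))
        = integral {0..2*pi} (\<lambda>t. \<epsilon> / 2 * F t) + integral {0..2*pi} (\<lambda>t. K / real (Suc N))"
      by (rule integral_add) (auto intro!: int_cont continuous_intros Fc)
    also have "integral {0..2*pi} (\<lambda>t. \<epsilon> / 2 * F t) = \<epsilon> / 2 * (2 * pi)"
      using integral_mult[OF iF, of "\<epsilon> / 2"] IF by simp
    also have "integral {0..2*pi} (\<lambda>t. K / real (Suc N)) = 2 * pi * (K / real (Suc N))"
      by simp
    finally show ?thesis by (simp add: algebra_simps)
  qed
  ultimately have bd: "norm (\<sigma> - (2 * pi) *\<^sub>R x) \<le> 2 * pi * (\<epsilon> / 2 + K / real (Suc N))" by simp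
  define a where "a = (1 / (2 * pi)) *\<^sub>R \<sigma>"
  have aA: "a \<in> A" unfolding a_def by (rule A_scaleR[OF sA])
  have "a - x = (1 / (2 * pi)) *\<^sub>R (\<sigma> - (2 * pi) *\<^sub>R x)"
    by (simp add: a_def scaleR_diff_right)
  then have "dist a x = (1 / (2 * pi)) * norm (\<sigma> - (2 * pi) *\<^sub>R x)"
    by (simp add: dist_norm)
  also have "\<dots> \<le> (1 / (2 * pi)) * (2 * pi * (\<epsilon> / 2 + K / real (Suc N)))"
    using bd by (intro mult_left_mono) auto
  also have "\<dots> = \<epsilon> / 2 + K / real (Suc N)" by simp
  also have "\<dots> < \<epsilon>" using KN by argo
  finally show ?thesis using aA by blast
qed

lemma cm_in_A: "x \<in> cm A \<Longrightarrow> x \<in> A"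
proof -
  assume x: "x \<in> cm A"
  have "x \<in> closure A" unfolding closure_approachable using approx[OF x] by blast
  then show "x \<in> A" using A_closed by (simp add: closure_closed)
qed

end

theorem theorem2p7:
  fixes sc :: "complex \<Rightarrow> 'a::{real_normed_algebra,banach} \<Rightarrow> 'a"
    and st :: "'a \<Rightarrow> 'a"
    and \<omega> :: "complex \<Rightarrow> 'a \<Rightarrow> 'a"
    and A :: "'a set"
  assumes "cstar_dynamical_system sc st \<omega>"
    and "maximal_abelian_invariant_star_subalgebra sc st \<omega> A"
  shows "maximal_abelian_subalgebra sc A"
proof -
  interpret cmax sc st \<omega> A
  proof unfold_locales
    show "cstar_algebra sc st" using assms(1) by (simp add: cstar_dynamical_system_def)
  qed (use assms in auto)
  show ?thesis
    unfolding maximal_abelian_subalgebra_def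
  proof (intro conjI allI impI)
    show "subalgebra sc A" by (rule A_sub)
    show "abelian A" unfolding abelian_def using A_ab by blast
    fix C assume C: "subalgebra sc C \<and> abelian C \<and> A \<subseteq> C"
    have "C \<subseteq> A"
    proof
      fix y assume y: "y \<in> C"
      have "y \<in> cm A" using C y unfolding abelian_def cm_def by blast
      then show "y \<in> A" by (rule cm_in_A)
    qed
    then show "C = A" using C by blast
  qed
qed

end
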